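(* Let $n,d\ge1$ and let $X$ be a lazy simple random walk on $\mathbb{Z}_n^d$ started at $X_0=0$. Let $f:\{1,2,\dots\}\to\mathbb{Z}_n^d$ be any function and let $a=(\lfloor n/2\rfloor,\dots,\lfloor n/2\rfloor)\in\mathbb{Z}_n^d$. Then for all $t\ge1$, \[ \mathbb{P}_0\big(X_1\neq f(1),\dots,X_t\neq f(t)\big)\le \mathbb{P}_0\big(X_1\neq a,\dots,X_t\neq a\big). \]
   Context: $\mathbb{Z}_n=\{0,1,\dots,n-1\}$ with addition mod $n$. The lazy simple random walk on $\mathbb{Z}_n^d$ is the Markov chain which at each step stays put with probability $1/2$ and otherwise moves from $x$ to $x\pm e_i$ ($i=1,\dots,d$, $e_i$ the standard unit vectors), each of these $2d$ moves having probability $1/(4d)$. *)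

theory Defs
  imports Complex_Main
begin

text \<open>Points of Z_n^d are represented as functions nat => nat that take values
  in {0..<n} on coordinates i < d and vanish on coordinates i >= d.\<close>

definition torus :: "nat \<Rightarrow> nat \<Rightarrow> (nat \<Rightarrow> nat) set" where
  "torus n d = {x. (\<forall>i<d. x i < n) \<and> (\<forall>i. d \<le> i \<longrightarrow> x i = 0)}"

definition origin :: "nat \<Rightarrow> nat" where
  "origin = (\<lambda>j. 0)"

definition move :: "nat \<Rightarrow> (nat \<Rightarrow> nat) \<Rightarrow> nat \<Rightarrow> int \<Rightarrow> (nat \<Rightarrow> nat)" where
  "move n x i s = (\<lambda>j. if j = i then nat ((int (x j) + s) mod int n) else x j)"

text \<open>Transition probability of the lazy simple random walk: stay with
  probability 1/2, each of the 2d moves x +- e_i with probability 1/(4d)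
  (coinciding moves add up).\<close>
definition lazy_P :: "nat \<Rightarrow> nat \<Rightarrow> (nat \<Rightarrow> nat) \<Rightarrow> (nat \<Rightarrow> nat) \<Rightarrow> real" where
  "lazy_P n d x y = (if y = x then 1/2 else 0)
     + (\<Sum>i<d. (of_bool (y = move n x i 1) + of_bool (y = move n x i (-1))) / (4 * real d))"

text \<open>avoid_mass n d g t y = P_0(X_1 \<noteq> g 1, ..., X_t \<noteq> g t, X_t = y).\<close>
fun avoid_mass :: "nat \<Rightarrow> nat \<Rightarrow> (nat \<Rightarrow> (nat \<Rightarrow> nat)) \<Rightarrow> nat \<Rightarrow> (nat \<Rightarrow> nat) \<Rightarrow> real" where
  "avoid_mass n d g 0 y = (if y = origin then 1 else 0)"
| "avoid_mass n d g (Suc s) y =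
     (if y = g (Suc s) then 0
      else (\<Sum>x\<in>torus n d. avoid_mass n d g s x * lazy_P n d x y))"

definition avoid_prob :: "nat \<Rightarrow> nat \<Rightarrow> (nat \<Rightarrow> (nat \<Rightarrow> nat)) \<Rightarrow> nat \<Rightarrow> real" where
  "avoid_prob n d g t = (\<Sum>y\<in>torus n d. avoid_mass n d g t y)"

definition antipode :: "nat \<Rightarrow> nat \<Rightarrow> (nat \<Rightarrow> nat)" where
  "antipode n d = (\<lambda>j. if j < d then n div 2 else 0)"

end

theory Submission
  imports Defs "HOL-Library.FuncSet"
begin


definition sc :: "nat \<Rightarrow> nat \<Rightarrow> nat" where "sc n v = (if Suc v = n then 0 else Suc v)"
definition pd :: "nat \<Rightarrow> nat \<Rightarrow> nat" where "pd n v = (if v = 0 then n - 1 else v - 1)"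

lemma mod_plus1: "v < n \<Longrightarrow> nat ((int v + 1) mod int n) = sc n v"
proof (cases "Suc v = n")
  case True
  then have "int v + 1 = int n" by simp
  then have "(int v + 1) mod int n = 0" by simp
  then show ?thesis using True by (simp add: sc_def)
next
  case False
  assume "v < n"
  with False have "int v + 1 < int n" by simp
  then have "(int v + 1) mod int n = int v + 1" by (simp add: mod_pos_pos_trivial)
  then show ?thesis using False by (simp add: sc_def)
qed

lemma mod_minus1: "v < n \<Longrightarrow> nat ((int v + - 1) mod int n) = pd n v"
proof (cases "v = 0")
  case True
  assume "v < n"
  then have "(-1::int) mod int n = int n - 1" using zmod_minus1[of "int n"] by simp
  then show ?thesis using True \<open>v < n\<close> by (simp add: pd_def nat_diff_distrib)
next
  case False
  assume "v < n"
  with False have "0 \<le> int v - 1" "int v - 1 < int n" by auto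
  then have "(int v - 1) mod int n = int v - 1" by (simp add: mod_pos_pos_trivial)
  then show ?thesis using False by (simp add: pd_def nat_diff_distrib)
qed

lemma sc_lt: "v < n \<Longrightarrow> sc n v < n" by (auto simp: sc_def)
lemma pd_lt: "v < n \<Longrightarrow> pd n v < n" by (auto simp: pd_def)
lemma pd_sc: "v < n \<Longrightarrow> pd n (sc n v) = v" by (auto simp: sc_def pd_def)
lemma sc_pd: "v < n \<Longrightarrow> sc n (pd n v) = v" by (auto simp: sc_def pd_def)

lemma move_plus: "x \<in> torus n d \<Longrightarrow> i < d \<Longrightarrow> move n x i 1 = x(i := sc n (x i))"
  by (auto simp: move_def torus_def fun_eq_iff mod_plus1)

lemma move_minus: "x \<in> torus n d \<Longrightarrow> i < d \<Longrightarrow> move n x i (-1) = x(i := pd n (x i))"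
  using mod_minus1 by (auto simp: move_def torus_def fun_eq_iff)

lemma upd_torus: "x \<in> torus n d \<Longrightarrow> i < d \<Longrightarrow> v < n \<Longrightarrow> x(i := v) \<in> torus n d"
  by (auto simp: torus_def)

lemma move_plus_torus: "x \<in> torus n d \<Longrightarrow> i < d \<Longrightarrow> move n x i 1 \<in> torus n d"
  by (simp add: move_plus upd_torus sc_lt torus_def)

lemma move_minus_torus: "x \<in> torus n d \<Longrightarrow> i < d \<Longrightarrow> move n x i (-1) \<in> torus n d"
  by (simp add: move_minus upd_torus pd_lt torus_def)

lemma finite_torus: "finite (torus n d)"
proof -
  have "torus n d \<subseteq> (\<lambda>f i. if i < d then f i else 0) ` (PiE {..<d} (\<lambda>_. {..<n}))"
  proof
    fix x assume x: "x \<in> torus n d"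
    have "restrict x {..<d} \<in> PiE {..<d} (\<lambda>_. {..<n})" using x by (auto simp: torus_def restrict_PiE_iff)
    moreover have "x = (\<lambda>i. if i < d then restrict x {..<d} i else 0)"
      using x by (auto simp: torus_def fun_eq_iff)
    ultimately show "x \<in> (\<lambda>f i. if i < d then f i else 0) ` (PiE {..<d} (\<lambda>_. {..<n}))" by blast
  qed
  moreover have "finite ((\<lambda>f i. if i < d then f i else 0) ` (PiE {..<d} (\<lambda>_. {..<n})))"
    by (intro finite_imageI finite_PiE) auto
  ultimately show ?thesis by (rule finite_subset)
qed

lemma sum_delta_T: "c \<in> torus n d \<Longrightarrow> (\<Sum>y\<in>torus n d. h y * of_bool (y = c)) = (h c :: real)"
proof -
  assume c: "c \<in> torus n d"
  have "(\<Sum>y\<in>torus n d. h y * of_bool (y = c)) = (\<Sum>y\<in>torus n d. if y = c then h y else 0)"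
    by (rule sum.cong) auto
  also have "\<dots> = h c" using c finite_torus by (simp add: sum.delta')
  finally show ?thesis .
qed

lemma sum_lazy:
  assumes x: "x \<in> torus n d"
  shows "(\<Sum>y\<in>torus n d. h y * lazy_P n d x y) =
     h x / 2 + (\<Sum>i<d. h (move n x i 1) + h (move n x i (-1))) / (4 * real d)"
proof -
  have "(\<Sum>y\<in>torus n d. h y * lazy_P n d x y) =
     (\<Sum>y\<in>torus n d. h y * of_bool (y = x) / 2) +
     (\<Sum>y\<in>torus n d. \<Sum>i<d. (h y * of_bool (y = move n x i 1) + h y * of_bool (y = move n x i (-1))) / (4 * real d))"
    unfolding sum.distrib[symmetric]
  proof (rule sum.cong)
    fix y
    show "h y * lazy_P n d x y = h y * of_bool (y = x) / 2 +
       (\<Sum>i<d. (h y * of_bool (y = move n x i 1) + h y * of_bool (y = move n x i (-1))) / (4 * real d))"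
      unfolding lazy_P_def distrib_left sum_distrib_left by (simp add: algebra_simps)
  qed simp
  also have "(\<Sum>y\<in>torus n d. h y * of_bool (y = x) / 2) = h x / 2"
    using sum_delta_T[OF x, of h] by (simp add: sum_divide_distrib[symmetric])
  also have "(\<Sum>y\<in>torus n d. \<Sum>i<d. (h y * of_bool (y = move n x i 1) + h y * of_bool (y = move n x i (-1))) / (4 * real d))
     = (\<Sum>i<d. \<Sum>y\<in>torus n d. (h y * of_bool (y = move n x i 1) + h y * of_bool (y = move n x i (-1))) / (4 * real d))"
    by (rule sum.swap)
  also have "\<dots> = (\<Sum>i<d. (h (move n x i 1) + h (move n x i (-1))) / (4 * real d))"
  proof (rule sum.cong)
    fix i assume "i \<in> {..<d}"
    then have i: "i < d" by simp
    show "(\<Sum>y\<in>torus n d. (h y * of_bool (y = move n x i 1) + h y * of_bool (y = move n x i (-1))) / (4 * real d))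
       = (h (move n x i 1) + h (move n x i (-1))) / (4 * real d)"
      using sum_delta_T[OF move_plus_torus[OF x i], of h] sum_delta_T[OF move_minus_torus[OF x i], of h]
      by (simp add: sum_divide_distrib[symmetric] sum.distrib)
  qed simp
  finally show ?thesis by (simp add: sum_divide_distrib)
qed

lemma lazy_nonneg: "lazy_P n d x y \<ge> 0"
  unfolding lazy_P_def by (intro add_nonneg_nonneg sum_nonneg divide_nonneg_nonneg) auto

lemma row_sum: "d \<ge> 1 \<Longrightarrow> x \<in> torus n d \<Longrightarrow> (\<Sum>y\<in>torus n d. lazy_P n d x y) = 1"
  using sum_lazy[of x n d "\<lambda>_. 1"] by simp

lemma move_adj:
  assumes x: "x \<in> torus n d" and y: "y \<in> torus n d" and i: "i < d"
  shows "(y = move n x i 1) = (x = move n y i (-1))"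
proof -
  have xi: "x i < n" "y i < n" using x y i by (auto simp: torus_def)
  show ?thesis unfolding move_plus[OF x i] move_minus[OF y i]
    using xi by (auto simp: fun_eq_iff pd_sc sc_pd)
qed

lemma lazy_sym:
  assumes x: "x \<in> torus n d" and y: "y \<in> torus n d"
  shows "lazy_P n d x y = lazy_P n d y x"
proof -
  have "(\<Sum>i<d. (of_bool (y = move n x i 1) + of_bool (y = move n x i (-1))) / (4 * real d))
      = (\<Sum>i<d. ((of_bool (x = move n y i 1) + of_bool (x = move n y i (-1))) :: real) / (4 * real d))"
  proof (rule sum.cong)
    fix i assume "i \<in> {..<d}"
    then have i: "i < d" by simp
    show "((of_bool (y = move n x i 1) + of_bool (y = move n x i (-1))) :: real) / (4 * real d)
      = (of_bool (x = move n y i 1) + of_bool (x = move n y i (-1))) / (4 * real d)"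
      using move_adj[OF x y i] move_adj[OF y x i] by simp
  qed simp
  then show ?thesis unfolding lazy_P_def by auto
qed



fun pk :: "nat \<Rightarrow> nat \<Rightarrow> nat \<Rightarrow> (nat \<Rightarrow> nat) \<Rightarrow> (nat \<Rightarrow> nat) \<Rightarrow> real" where
  "pk n d 0 x y = (if y = x then 1 else 0)"
| "pk n d (Suc k) x y = (\<Sum>z\<in>torus n d. pk n d k x z * lazy_P n d z y)"

definition hit :: "nat \<Rightarrow> nat \<Rightarrow> (nat \<Rightarrow> (nat \<Rightarrow> nat)) \<Rightarrow> nat \<Rightarrow> real" where
  "hit n d g r = (\<Sum>x\<in>torus n d. avoid_mass n d g (r - 1) x * lazy_P n d x (g r))"

lemma am_nonneg: "avoid_mass n d g s y \<ge> 0"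
  by (induction s arbitrary: y) (auto intro!: sum_nonneg mult_nonneg_nonneg lazy_nonneg)

lemma hit_nonneg: "hit n d g r \<ge> 0"
  unfolding hit_def by (auto intro!: sum_nonneg mult_nonneg_nonneg lazy_nonneg am_nonneg)

lemma decomp:
  assumes y: "y \<in> torus n d"
  shows "pk n d s origin y = avoid_mass n d g s y + (\<Sum>r\<in>{1..s}. hit n d g r * pk n d (s - r) (g r) y)"
  using y
proof (induction s arbitrary: y)
  case 0
  then show ?case by simp
next
  case (Suc s)
  define S where "S = (\<lambda>y. \<Sum>z\<in>torus n d. avoid_mass n d g s z * lazy_P n d z y)"
  have "pk n d (Suc s) origin y = (\<Sum>z\<in>torus n d. (avoid_mass n d g s z + (\<Sum>r\<in>{1..s}. hit n d g r * pk n d (s - r) (g r) z)) * lazy_P n d z y)"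
    using Suc.IH by (simp cong: sum.cong)
  also have "\<dots> = S y + (\<Sum>r\<in>{1..s}. hit n d g r * (\<Sum>z\<in>torus n d. pk n d (s - r) (g r) z * lazy_P n d z y))"
    unfolding S_def by (simp add: distrib_right sum.distrib sum_distrib_left sum_distrib_right mult.assoc) (rule sum.swap)
  also have "(\<Sum>r\<in>{1..s}. hit n d g r * (\<Sum>z\<in>torus n d. pk n d (s - r) (g r) z * lazy_P n d z y))
     = (\<Sum>r\<in>{1..s}. hit n d g r * pk n d (Suc s - r) (g r) y)"
    by (rule sum.cong) (auto simp: Suc_diff_le)
  also have "S y = avoid_mass n d g (Suc s) y + hit n d g (Suc s) * pk n d 0 (g (Suc s)) y"
    by (simp add: S_def hit_def)
  finally show ?case by simp
qed

lemma decomp_hit: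
  assumes "g s \<in> torus n d" "s \<ge> 1"
  shows "pk n d s origin (g s) = (\<Sum>r\<in>{1..s}. hit n d g r * pk n d (s - r) (g r) (g s))"
proof -
  obtain s' where "s = Suc s'" using assms(2) by (cases s) auto
  then show ?thesis using decomp[OF assms(1), of s g] by simp
qed

lemma mass:
  assumes n: "n \<ge> 1" and d: "d \<ge> 1" and g: "\<forall>s\<ge>1. g s \<in> torus n d"
  shows "(\<Sum>y\<in>torus n d. avoid_mass n d g s y) = 1 - (\<Sum>r\<in>{1..s}. hit n d g r)"
proof (induction s)
  case 0
  have "origin \<in> torus n d" using n by (simp add: torus_def origin_def)
  then show ?case using finite_torus by (simp add: sum.delta')
next
  case (Suc s)
  define S where "S = (\<lambda>y. \<Sum>z\<in>torus n d. avoid_mass n d g s z * lazy_P n d z y)"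
  have c: "g (Suc s) \<in> torus n d" using g by simp
  have "(\<Sum>y\<in>torus n d. avoid_mass n d g (Suc s) y) = (\<Sum>y\<in>torus n d. S y - (if y = g (Suc s) then S y else 0))"
    by (rule sum.cong) (auto simp: S_def)
  also have "\<dots> = (\<Sum>y\<in>torus n d. S y) - S (g (Suc s))"
    using c finite_torus by (simp add: sum_subtractf sum.delta')
  also have "(\<Sum>y\<in>torus n d. S y) = (\<Sum>z\<in>torus n d. avoid_mass n d g s z * (\<Sum>y\<in>torus n d. lazy_P n d z y))"
    unfolding S_def sum_distrib_left by (rule sum.swap)
  also have "\<dots> = (\<Sum>z\<in>torus n d. avoid_mass n d g s z)"
    using row_sum[OF d] by simp
  also have "S (g (Suc s)) = hit n d g (Suc s)" by (simp add: S_def hit_def)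
  finally show ?case using Suc.IH by simp
qed



definition cd :: "nat \<Rightarrow> nat \<Rightarrow> nat \<Rightarrow> nat" where
  "cd n u v = min (if u \<le> v then v - u else u - v) (n - (if u \<le> v then v - u else u - v))"
definition nbp :: "nat \<Rightarrow> nat \<Rightarrow> nat" where "nbp n e = min (Suc e) (n - Suc e)"
definition nbm :: "nat \<Rightarrow> nat \<Rightarrow> nat" where "nbm n e = (if e = 0 then min 1 (n - 1) else e - 1)"

definition Dv :: "nat \<Rightarrow> nat \<Rightarrow> (nat \<Rightarrow> nat) \<Rightarrow> (nat \<Rightarrow> nat) \<Rightarrow> (nat \<Rightarrow> nat)" where
  "Dv n d x y = (\<lambda>i. if i < d then cd n (x i) (y i) else 0)"

fun Phi :: "nat \<Rightarrow> nat \<Rightarrow> nat \<Rightarrow> (nat \<Rightarrow> nat) \<Rightarrow> real" where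
  "Phi n d 0 D = (if \<forall>i<d. D i = 0 then 1 else 0)"
| "Phi n d (Suc k) D = Phi n d k D / 2 +
     (\<Sum>i<d. Phi n d k (D(i := nbp n (D i))) + Phi n d k (D(i := nbm n (D i)))) / (4 * real d)"


lemma gen:
  fixes a :: nat
  assumes "0 < a" "a < n"
  shows "(min (a+1) (n-(a+1)) = nbp n (min a (n-a)) \<and> min (a-1) (n-(a-1)) = nbm n (min a (n-a))) \<or>
         (min (a+1) (n-(a+1)) = nbm n (min a (n-a)) \<and> min (a-1) (n-(a-1)) = nbp n (min a (n-a)))"
  using assms unfolding nbp_def nbm_def min_def by auto

lemma mm_flip: fixes b n :: nat assumes "b \<le> n" shows "min (n - b) (n - (n - b)) = min b (n - b)"
proof -
  have "n - (n - b) = b" using assms by simp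
  then show ?thesis by (simp add: min.commute)
qed

lemma pair:
  assumes u: "u < n" and v: "v < n"
  shows "(cd n u (sc n v) = nbp n (cd n u v) \<and> cd n u (pd n v) = nbm n (cd n u v)) \<or>
         (cd n u (sc n v) = nbm n (cd n u v) \<and> cd n u (pd n v) = nbp n (cd n u v))"
proof -
  consider (eq) "u = v" | (lt) "u < v" | (gt) "v < u" by linarith
  then show ?thesis
  proof cases
    case eq
    have "cd n u (sc n v) = min 1 (n - 1)"
      using eq v unfolding cd_def sc_def by auto
    moreover have "cd n u (pd n v) = min 1 (n - 1)"
      using eq v unfolding cd_def pd_def by auto
    moreover have "cd n u v = 0" using eq by (simp add: cd_def)
    ultimately show ?thesis by (simp add: nbp_def nbm_def)
  next
    case lt
    define a where "a = v - u"
    have a: "0 < a" "a < n" using lt v by (auto simp: a_def)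
    have c: "cd n u v = min a (n - a)" using lt by (simp add: cd_def a_def)
    have s: "cd n u (sc n v) = min (a+1) (n-(a+1))"
    proof (cases "Suc v = n")
      case True
      then have "cd n u (sc n v) = min (n - (a+1)) (n - (n - (a+1)))"
        using lt by (simp add: cd_def sc_def a_def)
      then show ?thesis using mm_flip[of "a+1" n] a by simp
    next
      case False
      then show ?thesis using lt by (simp add: cd_def sc_def a_def)
    qed
    have p: "cd n u (pd n v) = min (a-1) (n-(a-1))"
      using lt by (simp add: cd_def pd_def a_def)
    show ?thesis using gen[OF a] unfolding s p c .
  next
    case gt
    define a where "a = u - v"
    have a: "0 < a" "a < n" using gt u by (auto simp: a_def)
    have c: "cd n u v = min a (n - a)" using gt by (simp add: cd_def a_def)
    have s: "cd n u (sc n v) = min (a-1) (n-(a-1))"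
      using gt u by (simp add: cd_def sc_def a_def)
    have p: "cd n u (pd n v) = min (a+1) (n-(a+1))"
    proof (cases "v = 0")
      case True
      then have "cd n u (pd n v) = min (n - (a+1)) (n - (n - (a+1)))"
        using gt u by (simp add: cd_def pd_def a_def)
      then show ?thesis using mm_flip[of "a+1" n] a by simp
    next
      case False
      then have "pd n v = v - 1" by (simp add: pd_def)
      moreover have "u - (v - 1) = a + 1" using gt False by (simp add: a_def)
      ultimately show ?thesis using gt unfolding cd_def by simp
    qed
    show ?thesis using gen[OF a] unfolding s p c by blast
  qed
qed

lemma cd_zero: "u < n \<Longrightarrow> v < n \<Longrightarrow> (cd n u v = 0) = (u = v)"
  unfolding cd_def min_def by (auto split: if_splits)

lemma cd_le: "cd n u v \<le> n div 2"
  unfolding cd_def min_def by (auto split: if_splits)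

lemma Phi_nonneg: "Phi n d k D \<ge> 0"
  by (induction k arbitrary: D) (auto intro!: add_nonneg_nonneg divide_nonneg_nonneg sum_nonneg)

lemma pk_Phi:
  assumes x: "x \<in> torus n d" and y: "y \<in> torus n d"
  shows "pk n d k x y = Phi n d k (Dv n d x y)"
  using y
proof (induction k arbitrary: y)
  case 0
  have "(y = x) = (\<forall>i<d. cd n (x i) (y i) = 0)"
    using x 0 cd_zero by (auto simp: torus_def fun_eq_iff) (metis not_le)
  then show ?case by (simp add: Dv_def)
next
  case (Suc k)
  let ?D = "Dv n d x y"
  have "pk n d (Suc k) x y = (\<Sum>z\<in>torus n d. pk n d k x z * lazy_P n d y z)"
    using lazy_sym[OF _ Suc.prems] by (simp cong: sum.cong)
  also have "\<dots> = pk n d k x y / 2 + (\<Sum>i<d. pk n d k x (move n y i 1) + pk n d k x (move n y i (-1))) / (4 * real d)"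
    by (rule sum_lazy[OF Suc.prems])
  also have "(\<Sum>i<d. pk n d k x (move n y i 1) + pk n d k x (move n y i (-1)))
     = (\<Sum>i<d. Phi n d k (?D(i := nbp n (?D i))) + Phi n d k (?D(i := nbm n (?D i))))"
  proof (rule sum.cong)
    fix i assume "i \<in> {..<d}"
    then have i: "i < d" by simp
    have xi: "x i < n" "y i < n" using x Suc.prems i by (auto simp: torus_def)
    have e1: "Dv n d x (move n y i 1) = ?D(i := cd n (x i) (sc n (y i)))"
      using i by (auto simp: Dv_def move_plus[OF Suc.prems i] fun_eq_iff)
    have e2: "Dv n d x (move n y i (-1)) = ?D(i := cd n (x i) (pd n (y i)))"
      using i by (auto simp: Dv_def move_minus[OF Suc.prems i] fun_eq_iff)
    have Di: "?D i = cd n (x i) (y i)" using i by (simp add: Dv_def)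
    show "pk n d k x (move n y i 1) + pk n d k x (move n y i (-1))
        = Phi n d k (?D(i := nbp n (?D i))) + Phi n d k (?D(i := nbm n (?D i)))"
      unfolding Suc.IH[OF move_plus_torus[OF Suc.prems i]] Suc.IH[OF move_minus_torus[OF Suc.prems i]] e1 e2 Di
      using pair[OF xi] by auto
  qed simp
  finally show ?case using Suc.IH[OF Suc.prems] by simp
qed



definition valid :: "nat \<Rightarrow> nat \<Rightarrow> (nat \<Rightarrow> nat) \<Rightarrow> bool" where
  "valid n d D = ((\<forall>i<d. D i \<le> n div 2) \<and> (\<forall>i. d \<le> i \<longrightarrow> D i = 0))"

lemma nbp_le: "e \<le> n div 2 \<Longrightarrow> nbp n e \<le> n div 2"
  unfolding nbp_def by auto

lemma nbm_le: "e \<le> n div 2 \<Longrightarrow> nbm n e \<le> n div 2"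
  unfolding nbm_def by auto

lemma valid_upd: "valid n d D \<Longrightarrow> i < d \<Longrightarrow> e \<le> n div 2 \<Longrightarrow> valid n d (D(i := e))"
  unfolding valid_def by auto

lemma mono_multi:
  assumes single: "\<And>D j. valid n d D \<Longrightarrow> j < d \<Longrightarrow> Suc (D j) \<le> n div 2 \<Longrightarrow> Phi n d k (D(j := Suc (D j))) \<le> Phi n d k D"
  and V: "valid n d D" and i: "i < d" and ee: "e \<le> e'" and e': "e' \<le> n div 2"
  shows "Phi n d k (D(i := e')) \<le> Phi n d k (D(i := e))"
proof -
  have "m \<le> n div 2 \<longrightarrow> Phi n d k (D(i := m)) \<le> Phi n d k (D(i := e))" if "e \<le> m" for m
    using that
  proof (induction m rule: dec_induct)
    case base
    then show ?case by simp
  next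
    case (step m)
    show ?case
    proof
      assume sm: "Suc m \<le> n div 2"
      have v: "valid n d (D(i := m))" using valid_upd[OF V i] sm by simp
      have eq: "(D(i := m))(i := Suc ((D(i := m)) i)) = D(i := Suc m)" by simp
      have "Phi n d k ((D(i := m))(i := Suc ((D(i := m)) i))) \<le> Phi n d k (D(i := m))"
        using single[OF v i] sm by simp
      then have "Phi n d k (D(i := Suc m)) \<le> Phi n d k (D(i := m))" by (simp only: eq)
      also have "\<dots> \<le> Phi n d k (D(i := e))"
      proof -
        have "m \<le> n div 2" using sm by simp
        then show ?thesis using step.IH by blast
      qed
      finally show "Phi n d k (D(i := Suc m)) \<le> Phi n d k (D(i := e))" .
    qed
  qed
  then show ?thesis using ee e' by blast
qed

lemma mono_single:
  assumes d: "d \<ge> 1"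
  shows "valid n d D \<Longrightarrow> i < d \<Longrightarrow> Suc (D i) \<le> n div 2 \<Longrightarrow> Phi n d k (D(i := Suc (D i))) \<le> Phi n d k D"
proof (induction k arbitrary: D i)
  case 0
  then show ?case using Phi_nonneg[of n d 0 D] by auto
next
  case (Suc k)
  define e where "e = D i"
  define D' where "D' = D(i := Suc e)"
  define A where "A = (\<lambda>E j. Phi n d k (E(j := nbp n (E j))) + Phi n d k (E(j := nbm n (E j))))"
  have i: "i < d" and V: "valid n d D" and se: "Suc e \<le> n div 2" using Suc.prems by (auto simp: e_def)
  have split: "(\<Sum>j<d. A E j) = A E i + (\<Sum>j\<in>{..<d}-{i}. A E j)" for E
    using i by (simp add: sum.remove)
  have others: "(\<Sum>j\<in>{..<d}-{i}. A D' j) \<le> (\<Sum>j\<in>{..<d}-{i}. A D j)"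
  proof (rule sum_mono)
    fix j assume "j \<in> {..<d} - {i}"
    then have j: "j < d" "j \<noteq> i" by auto
    have Dj: "D' j = D j" using j by (simp add: D'_def)
    have dj: "D j \<le> n div 2" using V j by (simp add: valid_def)
    have h: "Phi n d k (D'(j := v)) \<le> Phi n d k (D(j := v))" if v: "v \<le> n div 2" for v
    proof -
      have vv: "valid n d (D(j := v))" using valid_upd[OF V j(1) v] .
      have eq: "D'(j := v) = (D(j := v))(i := Suc ((D(j := v)) i))"
        using j by (auto simp: D'_def e_def fun_eq_iff)
      have "Suc ((D(j := v)) i) \<le> n div 2" using j se by (simp add: e_def)
      then have "Phi n d k ((D(j := v))(i := Suc ((D(j := v)) i))) \<le> Phi n d k (D(j := v))"
        by (rule Suc.IH[OF vv i])
      then show ?thesis by (simp only: eq)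
    qed
    show "A D' j \<le> A D j"
      unfolding A_def Dj using h[OF nbp_le[OF dj]] h[OF nbm_le[OF dj]] by simp
  qed
  have nbm_s: "nbm n (Suc e) = e" by (simp add: nbm_def)
  have nbp_e: "nbp n e = Suc e" using se unfolding nbp_def by auto
  have DDi: "D(i := e) = D" by (simp add: e_def)
  have AD': "A D' i = Phi n d k (D(i := nbp n (Suc e))) + Phi n d k D"
    unfolding A_def D'_def using nbm_s DDi by simp
  have AD: "A D i = Phi n d k D' + Phi n d k (D(i := nbm n e))"
    unfolding A_def D'_def using nbp_e by (simp add: e_def)
  define X where "X = Phi n d k D - Phi n d k D'"
  have "Phi n d k (D(i := Suc (D i))) \<le> Phi n d k D"
    by (rule Suc.IH[OF V i]) (use se in \<open>simp add: e_def\<close>)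
  then have X: "X \<ge> 0" unfolding X_def D'_def e_def by linarith
  have single: "\<And>E j. valid n d E \<Longrightarrow> j < d \<Longrightarrow> Suc (E j) \<le> n div 2 \<Longrightarrow> Phi n d k (E(j := Suc (E j))) \<le> Phi n d k E"
    using Suc.IH by blast
  have Z: "Phi n d k (D(i := nbm n e)) - Phi n d k (D(i := nbp n (Suc e))) \<ge> - X"
  proof (cases "nbm n e \<le> nbp n (Suc e)")
    case True
    have "Phi n d k (D(i := nbp n (Suc e))) \<le> Phi n d k (D(i := nbm n e))"
      by (rule mono_multi[OF single V i True nbp_le[OF se]])
    then show ?thesis using X by simp
  next
    case False
    then have "n = 2" "e = 0" using se unfolding nbm_def nbp_def by (auto split: if_splits)
    then have "nbm n e = Suc e" "nbp n (Suc e) = e" by (auto simp: nbm_def nbp_def)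
    then show ?thesis using DDi by (simp add: X_def D'_def)
  qed
  have q: "4 * real d \<ge> 4" using d by simp
  have key: "A D' i + (\<Sum>j\<in>{..<d}-{i}. A D' j) \<le> A D i + (\<Sum>j\<in>{..<d}-{i}. A D j) + 2 * X"
    using AD AD' Z others X by (simp add: X_def)
  have "(A D' i + (\<Sum>j\<in>{..<d}-{i}. A D' j)) / (4 * real d) \<le> (A D i + (\<Sum>j\<in>{..<d}-{i}. A D j) + 2 * X) / (4 * real d)"
    using key q by (intro divide_right_mono) auto
  also have "\<dots> = (A D i + (\<Sum>j\<in>{..<d}-{i}. A D j)) / (4 * real d) + 2 * X / (4 * real d)"
    by (simp add: add_divide_distrib)
  also have "2 * X / (4 * real d) \<le> X / 2"
  proof -
    have "X * 1 \<le> X * real d" using X d by (intro mult_left_mono) auto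
    then show ?thesis using X q by (simp add: divide_simps)
  qed
  finally have fin: "(A D' i + (\<Sum>j\<in>{..<d}-{i}. A D' j)) / (4 * real d) \<le> (A D i + (\<Sum>j\<in>{..<d}-{i}. A D j)) / (4 * real d) + X / 2"
    by simp
  have "Phi n d (Suc k) D' = Phi n d k D' / 2 + (\<Sum>j<d. A D' j) / (4 * real d)"
    by (simp add: A_def)
  then have P1: "Phi n d (Suc k) D' = Phi n d k D' / 2 + (A D' i + (\<Sum>j\<in>{..<d}-{i}. A D' j)) / (4 * real d)"
    unfolding split .
  have "Phi n d (Suc k) D = Phi n d k D / 2 + (\<Sum>j<d. A D j) / (4 * real d)"
    by (simp add: A_def)
  then have P2: "Phi n d (Suc k) D = Phi n d k D / 2 + (A D i + (\<Sum>j\<in>{..<d}-{i}. A D j)) / (4 * real d)"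
    unfolding split .
  have "Phi n d (Suc k) D' \<le> Phi n d (Suc k) D"
    unfolding P1 P2 using fin X_def by linarith
  then show ?case unfolding D'_def e_def .
qed

lemma mono_all:
  assumes d: "d \<ge> 1" and V: "valid n d D" and V': "valid n d D'" and le: "\<forall>i. D i \<le> D' i"
  shows "Phi n d k D' \<le> Phi n d k D"
proof -
  define E where "E = (\<lambda>j i. if i < j then D i else D' i)"
  have VE: "valid n d (E j)" for j using V V' by (auto simp: valid_def E_def)
  have "Phi n d k D' \<le> Phi n d k (E j)" for j
  proof (induction j)
    case 0
    then show ?case by (simp add: E_def)
  next
    case (Suc j)
    have ES: "E (Suc j) = (E j)(j := D j)" by (auto simp: E_def fun_eq_iff)
    show ?case
    proof (cases "j < d")
      case True
      have "E j = (E j)(j := D' j)" by (auto simp: E_def fun_eq_iff)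
      moreover have "Phi n d k ((E j)(j := D' j)) \<le> Phi n d k ((E j)(j := D j))"
        using mono_multi[OF mono_single[OF d] VE True, of "D j" "D' j"] le V' True by (auto simp: valid_def)
      ultimately have "Phi n d k (E j) \<le> Phi n d k (E (Suc j))" unfolding ES by metis
      then show ?thesis using Suc.IH by linarith
    next
      case False
      then have "D j = D' j" using V V' by (simp add: valid_def)
      then have "E (Suc j) = E j" using ES by (auto simp: E_def fun_eq_iff)
      then show ?thesis using Suc.IH by simp
    qed
  qed
  moreover have "E d = D" using V V' by (auto simp: E_def valid_def fun_eq_iff)
  ultimately show ?thesis by metis
qed

lemma Dv_valid: "valid n d (Dv n d x y)"
  by (simp add: valid_def Dv_def cd_le)

lemma pk_le_diag:
  assumes d: "d \<ge> 1" and x: "x \<in> torus n d" and y: "y \<in> torus n d" and z: "z \<in> torus n d"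
  shows "pk n d k x y \<le> pk n d k z z"
proof -
  have "Dv n d z z = (\<lambda>_. 0)" by (auto simp: Dv_def cd_def fun_eq_iff)
  then have "pk n d k z z = Phi n d k (\<lambda>_. 0)" using pk_Phi[OF z z] by simp
  moreover have "Phi n d k (Dv n d x y) \<le> Phi n d k (\<lambda>_. 0)"
    by (rule mono_all[OF d _ Dv_valid]) (auto simp: valid_def)
  ultimately show ?thesis using pk_Phi[OF x y] by simp
qed

lemma antipode_torus: "n \<ge> 1 \<Longrightarrow> antipode n d \<in> torus n d"
  by (auto simp: antipode_def torus_def)

lemma origin_torus: "n \<ge> 1 \<Longrightarrow> origin \<in> torus n d"
  by (auto simp: origin_def torus_def)

lemma pk_antipode:
  assumes n: "n \<ge> 1" and d: "d \<ge> 1" and y: "y \<in> torus n d"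
  shows "pk n d k origin (antipode n d) \<le> pk n d k origin y"
proof -
  have c: "cd n 0 (n div 2) = n div 2" by (auto simp: cd_def)
  have "Phi n d k (Dv n d origin (antipode n d)) \<le> Phi n d k (Dv n d origin y)"
    by (rule mono_all[OF d Dv_valid Dv_valid]) (auto simp: Dv_def origin_def antipode_def c cd_le)
  then show ?thesis using pk_Phi[OF origin_torus[OF n] y] pk_Phi[OF origin_torus[OF n] antipode_torus[OF n]] by simp
qed




lemma inner_Suc:
  fixes b c :: "nat \<Rightarrow> real"
  shows "(\<Sum>k\<le>Suc j. b k * c (Suc j - k)) = (\<Sum>k\<le>j. b k * c (Suc (j - k))) + b (Suc j) * c 0"
proof -
  have "(\<Sum>k\<le>j. b k * c (Suc j - k)) = (\<Sum>k\<le>j. b k * c (Suc (j - k)))"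
    by (rule sum.cong) (auto simp: Suc_diff_le)
  then show ?thesis by simp
qed

lemma conv_assoc:
  fixes a b c :: "nat \<Rightarrow> real"
  shows "(\<Sum>s\<le>t. (\<Sum>r\<le>s. a r * b (s-r)) * c (t-s)) = (\<Sum>r\<le>t. a r * (\<Sum>k\<le>t-r. b k * c (t-r-k)))"
proof (induction t arbitrary: c)
  case 0
  then show ?case by simp
next
  case (Suc t)
  let ?c = "\<lambda>j. c (Suc j)"
  have L: "(\<Sum>s\<le>Suc t. (\<Sum>r\<le>s. a r * b (s-r)) * c (Suc t-s))
      = (\<Sum>s\<le>t. (\<Sum>r\<le>s. a r * b (s-r)) * ?c (t-s)) + (\<Sum>r\<le>Suc t. a r * b (Suc t-r)) * c 0"
  proof -
    have "(\<Sum>s\<le>t. (\<Sum>r\<le>s. a r * b (s-r)) * c (Suc t-s)) = (\<Sum>s\<le>t. (\<Sum>r\<le>s. a r * b (s-r)) * ?c (t-s))"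
      by (rule sum.cong) (auto simp: Suc_diff_le)
    then show ?thesis by simp
  qed
  have R: "(\<Sum>r\<le>Suc t. a r * (\<Sum>k\<le>Suc t-r. b k * c (Suc t-r-k)))
      = (\<Sum>r\<le>t. a r * (\<Sum>k\<le>t-r. b k * ?c (t-r-k))) + (\<Sum>r\<le>Suc t. a r * b (Suc t-r)) * c 0"
  proof -
    have "(\<Sum>r\<le>t. a r * (\<Sum>k\<le>Suc t-r. b k * c (Suc t-r-k)))
       = (\<Sum>r\<le>t. a r * (\<Sum>k\<le>t-r. b k * ?c (t-r-k)) + a r * b (Suc t - r) * c 0)"
    proof (rule sum.cong)
      fix r assume "r \<in> {..t}"
      then have r: "r \<le> t" by simp
      then have e: "Suc t - r = Suc (t - r)" by (simp add: Suc_diff_le)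
      show "a r * (\<Sum>k\<le>Suc t-r. b k * c (Suc t-r-k)) = a r * (\<Sum>k\<le>t-r. b k * ?c (t-r-k)) + a r * b (Suc t - r) * c 0"
        unfolding e inner_Suc by (simp add: algebra_simps)
    qed simp
    moreover have "(\<Sum>r\<le>t. a r * b (Suc t - r) * c 0) = (\<Sum>r\<le>t. a r * b (Suc t - r)) * c 0"
      by (simp add: sum_distrib_right)
    ultimately show ?thesis by (simp add: sum.distrib algebra_simps)
  qed
  show ?case using L R Suc[of ?c] by simp
qed

lemma conv_comm:
  fixes x y :: "nat \<Rightarrow> real"
  shows "(\<Sum>r\<le>s. x r * y (s-r)) = (\<Sum>r\<le>s. x (s-r) * y r)"
proof -
  have "(\<Sum>r\<le>s. x r * y (s-r)) = (\<Sum>r\<le>s. x (s-r) * y (s - (s-r)))"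
    using sum.atLeastAtMost_rev[of "\<lambda>r. x r * y (s-r)" 0 s] by (simp add: atLeast0AtMost)
  also have "\<dots> = (\<Sum>r\<le>s. x (s-r) * y r)" by (rule sum.cong) auto
  finally show ?thesis .
qed


lemma renewal_identity:
  fixes p F :: "nat \<Rightarrow> real"
  assumes rec: "\<And>s. s \<ge> 1 \<Longrightarrow> p s = (\<Sum>r\<le>s. F r * p (s-r))" and F0: "F 0 = 0" and p0: "p 0 = 1"
  shows "(\<Sum>k\<le>m. p k * (1 - (\<Sum>r\<le>m-k. F r))) = 1"
proof -
  have conv: "(\<Sum>r\<le>s. p r * F (s-r)) = (if s = 0 then 0 else p s)" for s
  proof -
    have "(\<Sum>r\<le>s. p r * F (s-r)) = (\<Sum>r\<le>s. p (s-r) * F r)" by (rule conv_comm)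
    also have "\<dots> = (\<Sum>r\<le>s. F r * p (s-r))" by (simp add: mult.commute)
    finally show ?thesis using rec[of s] F0 by (cases s) auto
  qed
  have "(\<Sum>k\<le>m. p k * (\<Sum>r\<le>m-k. F r)) = (\<Sum>k\<le>m. p k * (\<Sum>r\<le>m-k. F r * (\<lambda>_. 1::real) (m-k-r)))"
    by simp
  also have "\<dots> = (\<Sum>s\<le>m. (\<Sum>r\<le>s. p r * F (s-r)) * (\<lambda>_. 1::real) (m-s))"
    by (rule conv_assoc[symmetric])
  also have "\<dots> = (\<Sum>s\<le>m. if s = 0 then 0 else p s)" by (simp add: conv)
  also have "\<dots> = (\<Sum>s\<le>m. p s) - 1"
  proof -
    have "(\<Sum>s\<le>m. p s) = (\<Sum>s\<le>m. if s = 0 then 0 else p s) + p 0"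
      by (induction m) (auto simp: p0)
    then show ?thesis using p0 by simp
  qed
  finally have e: "(\<Sum>k\<le>m. p k * (\<Sum>r\<le>m-k. F r)) = (\<Sum>s\<le>m. p s) - 1" .
  have "(\<Sum>k\<le>m. p k * (1 - (\<Sum>r\<le>m-k. F r))) = (\<Sum>k\<le>m. p k) - (\<Sum>k\<le>m. p k * (\<Sum>r\<le>m-k. F r))"
    by (simp add: right_diff_distrib sum_subtractf)
  then show ?thesis using e by simp
qed

lemma renewal_main:
  fixes p R H :: "nat \<Rightarrow> real"
  assumes I: "\<And>m. (\<Sum>k\<le>m. p k * R (m-k)) = 1" and Rnn: "\<And>m. R m \<ge> 0"
    and g: "\<And>s. s \<le> t \<Longrightarrow> (\<Sum>r\<le>s. H r * p (s-r)) \<ge> 0"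
  shows "(\<Sum>r\<le>t. H r) \<ge> 0"
proof -
  have "0 \<le> (\<Sum>s\<le>t. (\<Sum>r\<le>s. H r * p (s-r)) * R (t-s))"
    by (rule sum_nonneg, rule mult_nonneg_nonneg) (use g Rnn in auto)
  also have "\<dots> = (\<Sum>r\<le>t. H r * (\<Sum>k\<le>t-r. p k * R (t-r-k)))"
    by (rule conv_assoc)
  also have "\<dots> = (\<Sum>r\<le>t. H r)"
  proof -
    have "(\<Sum>k\<le>t-r. p k * R (t-r-k)) = 1" for r using I[of "t-r"] .
    then show ?thesis by (simp del: diff_diff_left)
  qed
  finally show ?thesis .
qed

lemma sum_from1:
  fixes f :: "nat \<Rightarrow> real"
  assumes "f 0 = 0" shows "(\<Sum>r\<le>s. f r) = (\<Sum>r\<in>{1..s}. f r)"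
  unfolding atMost_atLeast0 using sum.atLeast_Suc_atMost[of 0 s f] assms by simp

theorem theorem1p2:
  fixes n d t :: nat and f :: "nat \<Rightarrow> (nat \<Rightarrow> nat)"
  assumes "n \<ge> 1" and "d \<ge> 1" and "t \<ge> 1"
    and "\<forall>s\<ge>1. f s \<in> torus n d"
  shows "avoid_prob n d f t \<le> avoid_prob n d (\<lambda>s. antipode n d) t"
proof -
  note n = assms(1) and d = assms(2) and fT = assms(4)
  define a where "a = antipode n d"
  have aT: "a \<in> torus n d" using antipode_torus[OF n] by (simp add: a_def)
  have oT: "origin \<in> torus n d" using origin_torus[OF n] .
  define p where "p = (\<lambda>k. pk n d k origin origin)"
  have pdiag: "pk n d k z z = p k" if "z \<in> torus n d" for k z
    using pk_le_diag[OF d that that oT, of k] pk_le_diag[OF d oT oT that, of k] by (simp add: p_def)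
  define F where "F = (\<lambda>r. if r = 0 then 0 else hit n d f r)"
  define G where "G = (\<lambda>r. if r = 0 then 0 else hit n d (\<lambda>s. a) r)"
  define F0 where "F0 = (\<lambda>r. if r = 0 then 0 else hit n d (\<lambda>s. origin) r)"
  have mf: "avoid_prob n d f t = 1 - (\<Sum>r\<le>t. F r)"
    unfolding avoid_prob_def mass[OF n d fT] by (subst sum_from1) (auto simp: F_def)
  have ma: "avoid_prob n d (\<lambda>s. a) t = 1 - (\<Sum>r\<le>t. G r)"
    unfolding avoid_prob_def using aT by (subst mass[OF n d]) (auto simp: G_def sum_from1)
  have R: "avoid_prob n d (\<lambda>s. origin) m = 1 - (\<Sum>r\<le>m. F0 r)" for m
    unfolding avoid_prob_def using oT by (subst mass[OF n d]) (auto simp: F0_def sum_from1)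
  have Rnn: "1 - (\<Sum>r\<le>m. F0 r) \<ge> 0" for m
    using R[of m] unfolding avoid_prob_def by (metis am_nonneg sum_nonneg)
  have I: "(\<Sum>k\<le>m. p k * (1 - (\<Sum>r\<le>m-k. F0 r))) = 1" for m
  proof (rule renewal_identity)
    fix s :: nat assume s: "s \<ge> 1"
    have "p s = (\<Sum>r\<in>{1..s}. hit n d (\<lambda>s. origin) r * pk n d (s - r) origin origin)"
      using decomp_hit[of "\<lambda>s. origin" s n d] oT s by (simp add: p_def)
    also have "\<dots> = (\<Sum>r\<le>s. F0 r * p (s-r))"
      by (subst sum_from1) (auto simp: F0_def p_def intro!: sum.cong)
    finally show "p s = (\<Sum>r\<le>s. F0 r * p (s-r))" .
  qed (auto simp: F0_def p_def)
  have gpos: "(\<Sum>r\<le>s. (F r - G r) * p (s-r)) \<ge> 0" if "s \<le> t" for s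
  proof (cases "s = 0")
    case True
    then show ?thesis by (simp add: F_def G_def)
  next
    case False
    then have s: "s \<ge> 1" by simp
    have "(\<Sum>r\<le>s. G r * p (s-r)) = (\<Sum>r\<in>{1..s}. hit n d (\<lambda>s. a) r * pk n d (s - r) a a)"
      by (subst sum_from1) (auto simp: G_def pdiag[OF aT] intro!: sum.cong)
    also have "\<dots> = pk n d s origin a"
      using decomp_hit[of "\<lambda>s. a" s n d] aT s by simp
    also have "\<dots> \<le> pk n d s origin (f s)"
      unfolding a_def by (rule pk_antipode[OF n d]) (use fT s in auto)
    also have "\<dots> = (\<Sum>r\<in>{1..s}. hit n d f r * pk n d (s - r) (f r) (f s))"
      using decomp_hit[of f s n d] fT s by simp
    also have "\<dots> \<le> (\<Sum>r\<in>{1..s}. hit n d f r * p (s - r))"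
    proof (rule sum_mono)
      fix r assume r: "r \<in> {1..s}"
      have "pk n d (s - r) (f r) (f s) \<le> p (s - r)"
        using pk_le_diag[OF d _ _ oT, of "f r" "f s" "s - r"] fT r s by (simp add: p_def)
      then show "hit n d f r * pk n d (s - r) (f r) (f s) \<le> hit n d f r * p (s - r)"
        by (rule mult_left_mono) (rule hit_nonneg)
    qed
    also have "\<dots> = (\<Sum>r\<le>s. F r * p (s-r))"
      by (subst sum_from1) (auto simp: F_def intro!: sum.cong)
    finally have "(\<Sum>r\<le>s. G r * p (s-r)) \<le> (\<Sum>r\<le>s. F r * p (s-r))" .
    then show ?thesis by (simp add: left_diff_distrib sum_subtractf)
  qed
  have "(\<Sum>r\<le>t. F r - G r) \<ge> 0"
    by (rule renewal_main[OF I Rnn gpos])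
  then show ?thesis using mf ma by (simp add: a_def sum_subtractf)
qed


end
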